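(* Let $n\ge1$, let $a_1,\dots,a_n$ be integers, and let $Q$ be a subset of $E=\{(i,j)\mid 1\le i<j\le n\}$. Let $E\overline{Q}$ be the tournament on $\{1,\dots,n\}$ containing $(i,j)$ for each $(i,j)\in E\setminus Q$ and $(j,i)$ for each $(i,j)\in Q$. Put $$A=\prod_{(i,j)\in Q}\frac{x_j}{x_i},\qquad B=\prod_{1\le i<j\le n}\Big(1-\frac{q^{a_j}x_j}{x_i}\Big).$$ Let $1\le r_1<r_2<\cdots<r_s\le n$, $R=\{r_1,\dots,r_s\}$, let $k_1,\dots,k_s$ be integers, and let $E_{\mathbf r,\mathbf k}$ denote the operation on rational functions of replacing $x_{r_i}$ by $x_{r_s}q^{k_s-k_i}$ for $i=1,\dots,s-1$. Then the degree in $x_{r_s}$ of the rational function $E_{\mathbf r,\mathbf k}(A/B)$ is $0$ if and only if $(r,m)\in E\overline{Q}$ for every $r\in R$ and every $m\in\{1,\dots,n\}\setminus R$; otherwise this degree is negative.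
   Context: $q$ is an indeterminate. The degree in $x$ of a rational function of $x$ is the degree in $x$ of its numerator minus the degree in $x$ of its denominator. *)

theory Defs
  imports "HOL-Library.Poly_Mapping" "HOL-Computational_Algebra.Fraction_Field"
begin

(* Laurent polynomials with integer coefficients in the variables indexed by nat:
  variable 0 is the indeterminate q, variable i (1 <= i) is x_i. This ring is an integral domain
  (library instance), so its fraction field is a field of rational functions. *)

type_synonym lpoly = "(nat \<Rightarrow>\<^sub>0 int) \<Rightarrow>\<^sub>0 int"

definition lmono :: "(nat \<Rightarrow>\<^sub>0 int) \<Rightarrow> lpoly" where
  "lmono m = Poly_Mapping.single m 1"

definition qpow :: "int \<Rightarrow> lpoly" where
  "qpow c = lmono (Poly_Mapping.single 0 c)"

definition xvar :: "nat \<Rightarrow> lpoly" where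
  "xvar i = lmono (Poly_Mapping.single i 1)"

definition xinv :: "nat \<Rightarrow> lpoly" where
  "xinv i = lmono (Poly_Mapping.single i (-1))"

definition ldeg :: "nat \<Rightarrow> lpoly \<Rightarrow> int" where
  "ldeg v p = Max ((\<lambda>m. Poly_Mapping.lookup m v) ` Poly_Mapping.keys p)"

definition rdeg :: "nat \<Rightarrow> lpoly fract \<Rightarrow> int" where
  "rdeg v f = (THE d. \<exists>P Q. P \<noteq> 0 \<and> Q \<noteq> 0 \<and> f = Fract P Q \<and> d = ldeg v P - ldeg v Q)"

definition lsubst :: "(nat \<Rightarrow> (nat \<Rightarrow>\<^sub>0 int)) \<Rightarrow> lpoly \<Rightarrow> lpoly" where
  "lsubst g p = (\<Sum>m\<in>Poly_Mapping.keys p. Poly_Mapping.single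
      (\<Sum>v\<in>Poly_Mapping.keys m. Poly_Mapping.map (\<lambda>c. Poly_Mapping.lookup m v * c) (g v)) (Poly_Mapping.lookup p m))"

definition Esub :: "(nat \<Rightarrow> nat) \<Rightarrow> nat \<Rightarrow> (nat \<Rightarrow> int) \<Rightarrow> lpoly \<Rightarrow> lpoly" where
  "Esub r s k = lsubst (\<lambda>v. if (\<exists>i\<in>{1..<s}. r i = v)
      then Poly_Mapping.single (r s) 1 + Poly_Mapping.single 0 (k s - k (SOME i. i \<in> {1..<s} \<and> r i = v))
      else Poly_Mapping.single v 1)"

definition Epairs :: "nat \<Rightarrow> (nat \<times> nat) set" where
  "Epairs n = {(i, j). 1 \<le> i \<and> i < j \<and> j \<le> n}"

definition EQbar :: "nat \<Rightarrow> (nat \<times> nat) set \<Rightarrow> (nat \<times> nat) set" where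
  "EQbar n Q = (Epairs n - Q) \<union> {(j, i) | i j. (i, j) \<in> Q}"

definition Apoly :: "(nat \<times> nat) set \<Rightarrow> lpoly" where
  "Apoly Q = (\<Prod>(i, j)\<in>Q. xvar j * xinv i)"

definition Bpoly :: "nat \<Rightarrow> (nat \<Rightarrow> int) \<Rightarrow> lpoly" where
  "Bpoly n a = (\<Prod>(i, j)\<in>Epairs n. 1 - qpow (a j) * xvar j * xinv i)"

end

theory Submission imports Defs begin

definition phi :: "(nat \<Rightarrow> (nat \<Rightarrow>\<^sub>0 int)) \<Rightarrow> (nat \<Rightarrow>\<^sub>0 int) \<Rightarrow> (nat \<Rightarrow>\<^sub>0 int)" where
  "phi g m = (\<Sum>v\<in>Poly_Mapping.keys m. Poly_Mapping.map (\<lambda>c. Poly_Mapping.lookup m v * c) (g v))"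

lemma lookup_map_mult: "Poly_Mapping.lookup (Poly_Mapping.map (\<lambda>c. (a::int) * c) p) w = a * Poly_Mapping.lookup p w"
  by (simp add: Poly_Mapping.map.rep_eq when_def)

lemma lookup_phi: "Poly_Mapping.lookup (phi g m) w = (\<Sum>v\<in>Poly_Mapping.keys m. Poly_Mapping.lookup m v * Poly_Mapping.lookup (g v) w)"
  by (simp add: phi_def lookup_sum lookup_map_mult)

lemma lookup_phi_S:
  assumes "finite S" "Poly_Mapping.keys m \<subseteq> S"
  shows "Poly_Mapping.lookup (phi g m) w = (\<Sum>v\<in>S. Poly_Mapping.lookup m v * Poly_Mapping.lookup (g v) w)"
  unfolding lookup_phi
  by (rule sum.mono_neutral_left) (use assms in \<open>auto simp: in_keys_iff\<close>)

lemma phi_add: "phi g (m1 + m2) = phi g m1 + phi g m2"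
proof (rule poly_mapping_eqI)
  fix w
  let ?S = "Poly_Mapping.keys m1 \<union> Poly_Mapping.keys m2"
  have "Poly_Mapping.keys (m1 + m2) \<subseteq> ?S" by (rule keys_add)
  then show "Poly_Mapping.lookup (phi g (m1 + m2)) w = Poly_Mapping.lookup (phi g m1 + phi g m2) w"
    by (simp add: lookup_add lookup_phi_S[of ?S] distrib_right sum.distrib)
qed

lemma phi_zero [simp]: "phi g 0 = 0"
  by (simp add: phi_def)

lemma lookup_phi_single: "Poly_Mapping.lookup (phi g (Poly_Mapping.single v c)) w = c * Poly_Mapping.lookup (g v) w"
  by (subst lookup_phi_S[of "{v}"]) auto

lemma frag_cmul_of: "frag_cmul c (frag_of a) = Poly_Mapping.single a c"
  by (rule poly_mapping_eqI) (simp add: lookup_single when_def)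

lemma lsubst_frag: "lsubst g p = frag_extend (\<lambda>m. frag_of (phi g m)) p"
  unfolding lsubst_def frag_extend_def phi_def
  by (simp add: frag_cmul_of)

lemma F_mult: "frag_extend (\<lambda>m. frag_of (phi g m)) (p * q)
   = frag_extend (\<lambda>m. frag_of (phi g m)) p * frag_extend (\<lambda>m. frag_of (phi g m)) q"
proof -
  have hone: "frag_extend (\<lambda>m. frag_of (phi g m)) (frag_of x * q)
   = frag_of (phi g x) * frag_extend (\<lambda>m. frag_of (phi g m)) q" for x
    using subset_UNIV[of "Poly_Mapping.keys q"]
  proof (induction q rule: frag_induction)
    case zero then show ?case by simp
  next
    case (one y) then show ?case by (simp add: mult_single phi_add)
  next
    case (diff a b) then show ?case by (simp add: right_diff_distrib frag_extend_diff)
  qed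
  show ?thesis
    using subset_UNIV[of "Poly_Mapping.keys p"]
  proof (induction p rule: frag_induction)
    case zero then show ?case by simp
  next
    case (one x) then show ?case by (simp add: hone)
  next
    case (diff a b) then show ?case by (simp add: left_diff_distrib frag_extend_diff)
  qed
qed

lemma lsubst_mult: "lsubst g (p * q) = lsubst g p * lsubst g q"
  by (simp add: lsubst_frag F_mult)

lemma lsubst_diff: "lsubst g (p - q) = lsubst g p - lsubst g q"
  by (simp add: lsubst_frag frag_extend_diff)

lemma lsubst_frag_of: "lsubst g (frag_of m) = frag_of (phi g m)"
  by (simp add: lsubst_frag)

lemma lsubst_one: "lsubst g 1 = 1"
  using lsubst_frag_of[of g 0] by simp

lemma lsubst_prod: "lsubst g (prod f A) = (\<Prod>x\<in>A. lsubst g (f x))"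
proof (cases "finite A")
  case True then show ?thesis
    by (induction A rule: finite_induct) (simp_all add: lsubst_one lsubst_mult)
next
  case False then show ?thesis by (simp add: lsubst_one)
qed


abbreviation ex :: "nat \<Rightarrow> (nat \<Rightarrow>\<^sub>0 int) \<Rightarrow> int" where "ex v m \<equiv> Poly_Mapping.lookup m v"

lemma ldeg_props:
  assumes "p \<noteq> 0"
  shows "\<forall>m\<in>Poly_Mapping.keys p. ex v m \<le> ldeg v p" "\<exists>m\<in>Poly_Mapping.keys p. ex v m = ldeg v p"
proof -
  have ne: "Poly_Mapping.keys p \<noteq> {}" using assms by simp
  show "\<forall>m\<in>Poly_Mapping.keys p. ex v m \<le> ldeg v p"
    unfolding ldeg_def using ne by (auto intro: Max_ge)
  have "ldeg v p \<in> (\<lambda>m. ex v m) ` Poly_Mapping.keys p"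
    unfolding ldeg_def using ne by (intro Max_in) auto
  then show "\<exists>m\<in>Poly_Mapping.keys p. ex v m = ldeg v p" by auto
qed

lemma ldeg_eqI:
  assumes "\<forall>m\<in>Poly_Mapping.keys p. ex v m \<le> d" "mz \<in> Poly_Mapping.keys p" "ex v mz = d"
  shows "ldeg v p = d"
  unfolding ldeg_def
  by (rule Max_eqI) (use assms in auto)

definition part :: "((nat \<Rightarrow>\<^sub>0 int) \<Rightarrow> bool) \<Rightarrow> lpoly \<Rightarrow> lpoly" where
  "part P p = Poly_Mapping.mapp (\<lambda>m c. if P m then c else 0) p"

lemma lookup_part: "Poly_Mapping.lookup (part P p) k = (if P k then Poly_Mapping.lookup p k else 0)"
  by (simp add: part_def lookup_mapp when_def in_keys_iff)

lemma keys_part: "Poly_Mapping.keys (part P p) \<subseteq> {m. P m}"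
  by (auto simp: in_keys_iff lookup_part split: if_splits)

lemma keys_mult_bound:
  assumes "\<forall>m\<in>Poly_Mapping.keys p. ex v m \<le> a" "\<forall>m\<in>Poly_Mapping.keys q. ex v m \<le> b"
  shows "\<forall>m\<in>Poly_Mapping.keys (p * q). ex v m \<le> a + b"
  using keys_mult[of p q] assms by (force simp: lookup_add)

lemma keys_mult_bound_lt:
  assumes "\<forall>m\<in>Poly_Mapping.keys p. ex v m < a" "\<forall>m\<in>Poly_Mapping.keys q. ex v m \<le> b"
  shows "\<forall>m\<in>Poly_Mapping.keys (p * q). ex v m < a + b"
  using keys_mult[of p q] assms by (force simp: lookup_add)

lemma keys_mult_eq:
  assumes "\<forall>m\<in>Poly_Mapping.keys p. ex v m = a" "\<forall>m\<in>Poly_Mapping.keys q. ex v m = b"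
  shows "\<forall>m\<in>Poly_Mapping.keys (p * q). ex v m = a + b"
  using keys_mult[of p q] assms by (force simp: lookup_add)

lemma ldeg_mult:
  fixes p q :: lpoly
  assumes "p \<noteq> 0" "q \<noteq> 0"
  shows "ldeg v (p * q) = ldeg v p + ldeg v q"
proof -
  define dp where "dp = ldeg v p"
  define dq where "dq = ldeg v q"
  define tp where "tp = part (\<lambda>m. ex v m = dp) p"
  define tq where "tq = part (\<lambda>m. ex v m = dq) q"
  define rp where "rp = p - tp"
  define rq where "rq = q - tq"
  have pb: "\<forall>m\<in>Poly_Mapping.keys p. ex v m \<le> dp" and qb: "\<forall>m\<in>Poly_Mapping.keys q. ex v m \<le> dq"
    using ldeg_props assms unfolding dp_def dq_def by blast+
  obtain mp where mp: "mp \<in> Poly_Mapping.keys p" "ex v mp = dp"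
    using ldeg_props(2)[OF assms(1)] unfolding dp_def by blast
  obtain mq where mq: "mq \<in> Poly_Mapping.keys q" "ex v mq = dq"
    using ldeg_props(2)[OF assms(2)] unfolding dq_def by blast
  have tp0: "tp \<noteq> 0"
  proof
    assume "tp = 0"
    then have "Poly_Mapping.lookup tp mp = 0" by simp
    then show False using mp by (simp add: tp_def lookup_part in_keys_iff)
  qed
  have tq0: "tq \<noteq> 0"
  proof
    assume "tq = 0"
    then have "Poly_Mapping.lookup tq mq = 0" by simp
    then show False using mq by (simp add: tq_def lookup_part in_keys_iff)
  qed
  have tpk: "\<forall>m\<in>Poly_Mapping.keys tp. ex v m = dp" using keys_part unfolding tp_def by blast
  have tqk: "\<forall>m\<in>Poly_Mapping.keys tq. ex v m = dq" using keys_part unfolding tq_def by blast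
  have tpk': "\<forall>m\<in>Poly_Mapping.keys tp. ex v m \<le> dp" using tpk by simp
  have rpk: "\<forall>m\<in>Poly_Mapping.keys rp. ex v m < dp"
  proof
    fix m assume "m \<in> Poly_Mapping.keys rp"
    then have "Poly_Mapping.lookup p m \<noteq> 0" "ex v m \<noteq> dp"
      by (auto simp: rp_def tp_def in_keys_iff lookup_minus lookup_part split: if_splits)
    then show "ex v m < dp" using pb by (force simp: in_keys_iff)
  qed
  have rqk: "\<forall>m\<in>Poly_Mapping.keys rq. ex v m < dq"
  proof
    fix m assume "m \<in> Poly_Mapping.keys rq"
    then have "Poly_Mapping.lookup q m \<noteq> 0" "ex v m \<noteq> dq"
      by (auto simp: rq_def tq_def in_keys_iff lookup_minus lookup_part split: if_splits)
    then show "ex v m < dq" using qb by (force simp: in_keys_iff)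
  qed
  define X where "X = tp * rq + rp * q"
  have pq: "p * q = tp * tq + X"
    unfolding X_def rp_def rq_def by (simp add: algebra_simps)
  have X1: "\<forall>m\<in>Poly_Mapping.keys (tp * rq). ex v m < dp + dq"
    using keys_mult_bound_lt[OF rqk tpk'] by (simp add: mult.commute add.commute)
  have X2: "\<forall>m\<in>Poly_Mapping.keys (rp * q). ex v m < dp + dq"
    using keys_mult_bound_lt[OF rpk qb] .
  have Xk: "\<forall>m\<in>Poly_Mapping.keys X. ex v m < dp + dq"
    using X1 X2 keys_add[of "tp * rq" "rp * q"] unfolding X_def by blast
  have tt0: "tp * tq \<noteq> 0" using tp0 tq0 by simp
  then obtain m0 where m0: "m0 \<in> Poly_Mapping.keys (tp * tq)" by fastforce
  have em0: "ex v m0 = dp + dq" using keys_mult_eq[OF tpk tqk] m0 by blast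
  have "m0 \<notin> Poly_Mapping.keys X" using Xk em0 by force
  then have "Poly_Mapping.lookup (p * q) m0 = Poly_Mapping.lookup (tp * tq) m0"
    by (simp add: pq lookup_add in_keys_iff)
  then have m0k: "m0 \<in> Poly_Mapping.keys (p * q)" using m0 by (simp add: in_keys_iff)
  have "ldeg v (p * q) = dp + dq"
    by (rule ldeg_eqI[OF keys_mult_bound[OF pb qb] m0k em0])
  then show ?thesis unfolding dp_def dq_def .
qed

lemma rdeg_Fract:
  assumes "P \<noteq> 0" "Q \<noteq> 0"
  shows "rdeg v (Fract P Q) = ldeg v P - ldeg v Q"
  unfolding rdeg_def
proof (rule the_equality)
  show "\<exists>P' Q'. P' \<noteq> 0 \<and> Q' \<noteq> 0 \<and> Fract P Q = Fract P' Q' \<and> ldeg v P - ldeg v Q = ldeg v P' - ldeg v Q'"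
    using assms by blast
next
  fix d assume "\<exists>P' Q'. P' \<noteq> 0 \<and> Q' \<noteq> 0 \<and> Fract P Q = Fract P' Q' \<and> d = ldeg v P' - ldeg v Q'"
  then obtain P' Q' where h: "P' \<noteq> 0" "Q' \<noteq> 0" "Fract P Q = Fract P' Q'" "d = ldeg v P' - ldeg v Q'"
    by blast
  then have "P * Q' = P' * Q" using assms eq_fract(1) by blast
  then have "ldeg v (P * Q') = ldeg v (P' * Q)" by simp
  then have "ldeg v P + ldeg v Q' = ldeg v P' + ldeg v Q" using assms h by (simp add: ldeg_mult)
  then show "d = ldeg v P - ldeg v Q" using h by simp
qed

lemma ldeg_prod:
  assumes "finite A" "\<forall>x\<in>A. f x \<noteq> (0::lpoly)"
  shows "ldeg v (prod f A) = (\<Sum>x\<in>A. ldeg v (f x))"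
  using assms
proof (induction A rule: finite_induct)
  case empty
  have "ldeg v (1::lpoly) = 0"
    by (rule ldeg_eqI[where mz=0]) (auto simp flip: single_one)
  then show ?case by simp
next
  case (insert x F)
  then have "prod f F \<noteq> 0" by simp
  with insert show ?case by (simp add: ldeg_mult)
qed

lemma ldeg_frag_of: "ldeg v (frag_of m) = ex v m"
  by (rule ldeg_eqI[where mz=m]) auto

lemma ldeg_one_minus:
  assumes "m \<noteq> 0"
  shows "ldeg v (1 - frag_of m) = max 0 (ex v m)"
proof -
  have k: "Poly_Mapping.keys (1 - frag_of m) = {0, m}"
    using assms by (auto simp: in_keys_iff lookup_minus lookup_one when_def simp flip: single_one split: if_splits)
  show ?thesis unfolding ldeg_def k by (simp add: max_def)
qed


theorem mainTheorem8:
  fixes n s :: nat and a k :: "nat \<Rightarrow> int" and Q :: "(nat \<times> nat) set" and r :: "nat \<Rightarrow> nat"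
  assumes "n \<ge> 1"
    and "Q \<subseteq> Epairs n"
    and "s \<ge> 1"
    and "strict_mono_on {1..s} r"
    and "1 \<le> r 1" and "r s \<le> n"
    and "Esub r s k (Bpoly n a) \<noteq> 0"
  shows "(rdeg (r s) (Fract (Esub r s k (Apoly Q)) (Esub r s k (Bpoly n a))) = 0
            \<longleftrightarrow> (\<forall>x\<in>r ` {1..s}. \<forall>m\<in>{1..n} - r ` {1..s}. (x, m) \<in> EQbar n Q))
         \<and> (\<not> (\<forall>x\<in>r ` {1..s}. \<forall>m\<in>{1..n} - r ` {1..s}. (x, m) \<in> EQbar n Q)
            \<longrightarrow> rdeg (r s) (Fract (Esub r s k (Apoly Q)) (Esub r s k (Bpoly n a))) < 0)"
proof -
  define R where "R = r ` {1..s}"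
  define w where "w = r s"
  define g where "g = (\<lambda>v. if (\<exists>i\<in>{1..<s}. r i = v)
      then Poly_Mapping.single (r s) 1 + Poly_Mapping.single 0 (k s - k (SOME i. i \<in> {1..<s} \<and> r i = v))
      else Poly_Mapping.single v (1::int))"
  define ind where "ind v = (if v \<in> R then 1 else (0::int))" for v
  have ES: "Esub r s k = lsubst g" unfolding Esub_def g_def ..
  have Rb: "R \<subseteq> {1..n}"
  proof
    fix x assume "x \<in> R"
    then obtain i where i: "i \<in> {1..s}" "x = r i" unfolding R_def by blast
    have "r 1 \<le> r i" using strict_mono_on_leD[OF assms(4), of 1 i] i assms(3) by auto
    moreover have "r i \<le> r s" using strict_mono_on_leD[OF assms(4), of i s] i assms(3) by auto
    ultimately show "x \<in> {1..n}" using i assms(5,6) by auto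
  qed
  have "w \<in> R" using assms(3) unfolding R_def w_def by auto
  then have w1: "w \<ge> 1" using Rb by auto
  have R': "R = r ` {1..<s} \<union> {w}" unfolding R_def w_def using assms(3)
    by (auto simp: image_def) (metis atLeastAtMost_iff atLeastLessThan_iff le_eq_less_or_eq)
  have wnot: "w \<notin> r ` {1..<s}"
  proof
    assume "w \<in> r ` {1..<s}"
    then obtain i where "i \<in> {1..<s}" "r i = r s" unfolding w_def by (metis imageE)
    moreover have "strict_mono_on {1..s} r" by (rule assms(4))
    ultimately show False unfolding strict_mono_on_def
      by (metis atLeastAtMost_iff atLeastLessThan_iff assms(3) less_irrefl order.order_iff_strict le_refl)
  qed
  have gl: "Poly_Mapping.lookup (g v) w = ind v" for v
  proof (cases "\<exists>i\<in>{1..<s}. r i = v")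
    case True
    then have "v \<in> R" using R' by auto
    then show ?thesis using True w1 by (simp add: g_def ind_def w_def[symmetric] lookup_add lookup_single)
  next
    case False
    then have "v \<in> R \<longleftrightarrow> v = w" using R' by auto
    then show ?thesis using False by (auto simp: g_def ind_def lookup_single when_def)
  qed
  have ind0: "ind 0 = 0" using Rb by (auto simp: ind_def)
  have fE: "finite (Epairs n)"
    by (rule finite_subset[of _ "{1..n} \<times> {1..n}"]) (auto simp: Epairs_def)
  have fQ: "finite Q" using finite_subset[OF assms(2) fE] .
  define MA where "MA x = phi g (Poly_Mapping.single (snd x) 1) + phi g (Poly_Mapping.single (fst x) (-1))" for x :: "nat \<times> nat"
  define MB where "MB x = phi g (Poly_Mapping.single 0 (a (snd x))) + (phi g (Poly_Mapping.single (snd x) 1) + phi g (Poly_Mapping.single (fst x) (-1)))" for x :: "nat \<times> nat"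
  define dd where "dd x = ind (snd x) - ind (fst x)" for x :: "nat \<times> nat"
  have hA: "lsubst g ((\<lambda>(i, j). xvar j * xinv i) x) = frag_of (MA x)" for x
    by (cases x) (simp add: MA_def xvar_def xinv_def lmono_def lsubst_mult lsubst_frag_of mult_single phi_add)
  have hB: "lsubst g ((\<lambda>(i, j). 1 - qpow (a j) * xvar j * xinv i) x) = 1 - frag_of (MB x)" for x
    by (cases x) (simp add: MB_def qpow_def xvar_def xinv_def lmono_def lsubst_mult lsubst_diff lsubst_one lsubst_frag_of mult_single phi_add add.assoc)
  have eA: "ex w (MA x) = dd x" for x
    by (simp add: MA_def dd_def lookup_add lookup_phi_single gl)
  have eB: "ex w (MB x) = dd x" for x
    by (simp add: MB_def dd_def lookup_add lookup_phi_single gl ind0)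
  have EA: "Esub r s k (Apoly Q) = (\<Prod>x\<in>Q. frag_of (MA x))"
    unfolding ES Apoly_def lsubst_prod hA ..
  have EB: "Esub r s k (Bpoly n a) = (\<Prod>x\<in>Epairs n. 1 - frag_of (MB x))"
    unfolding ES Bpoly_def lsubst_prod hB ..
  have B0: "\<forall>x\<in>Epairs n. 1 - frag_of (MB x) \<noteq> 0"
    using assms(7) fE unfolding EB by auto
  have MB0: "MB x \<noteq> 0" if "x \<in> Epairs n" for x
  proof
    assume "MB x = 0"
    then have "1 - frag_of (MB x) = 0" by simp
    then show False using B0 that by blast
  qed
  have A0: "Esub r s k (Apoly Q) \<noteq> 0" unfolding EA using fQ by simp
  have dA: "ldeg w (Esub r s k (Apoly Q)) = (\<Sum>x\<in>Q. dd x)"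
    unfolding EA using fQ by (simp add: ldeg_prod ldeg_frag_of eA)
  have dB: "ldeg w (Esub r s k (Bpoly n a)) = (\<Sum>x\<in>Epairs n. max 0 (dd x))"
    unfolding EB using fE B0 by (simp add: ldeg_prod ldeg_one_minus MB0 eB)
  define D where "D = rdeg (r s) (Fract (Esub r s k (Apoly Q)) (Esub r s k (Bpoly n a)))"
  have D: "D = (\<Sum>x\<in>Q. dd x) - (\<Sum>x\<in>Epairs n. max 0 (dd x))"
    unfolding D_def w_def[symmetric] using A0 assms(7) by (simp add: rdeg_Fract dA dB)
  have split: "(\<Sum>x\<in>Epairs n. max 0 (dd x)) = (\<Sum>x\<in>Q. max 0 (dd x)) + (\<Sum>x\<in>Epairs n - Q. max 0 (dd x))"
    using sum.subset_diff[OF assms(2) fE, of "\<lambda>x. max 0 (dd x)"] by simp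
  define S1 where "S1 = (\<Sum>x\<in>Q. - min 0 (dd x))"
  define S2 where "S2 = (\<Sum>x\<in>Epairs n - Q. max 0 (dd x))"
  have D2: "D = - (S1 + S2)"
    unfolding D split S1_def S2_def
    by (simp add: sum_subtractf[symmetric] sum_negf) (smt (verit) sum.cong)
  have S1: "S1 \<ge> 0" unfolding S1_def by (intro sum_nonneg) simp
  have S2: "S2 \<ge> 0" unfolding S2_def by (intro sum_nonneg) simp
  have Dle: "D \<le> 0" using D2 S1 S2 by simp
  have "D = 0 \<longleftrightarrow> S1 = 0 \<and> S2 = 0" using D2 S1 S2 by linarith
  also have "\<dots> \<longleftrightarrow> (\<forall>x\<in>Q. min 0 (dd x) = 0) \<and> (\<forall>x\<in>Epairs n - Q. max 0 (dd x) = 0)"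
    unfolding S1_def S2_def using fQ fE by (simp add: sum_nonneg_eq_0_iff)
  also have "\<dots> \<longleftrightarrow> (\<forall>(i,j)\<in>Q. \<not> (i \<in> R \<and> j \<notin> R)) \<and> (\<forall>(i,j)\<in>Epairs n - Q. \<not> (j \<in> R \<and> i \<notin> R))"
    by (auto simp: dd_def ind_def split: if_splits) (metis DiffI fst_conv snd_conv)+
  also have "\<dots> \<longleftrightarrow> (\<forall>x\<in>R. \<forall>m\<in>{1..n} - R. (x, m) \<in> EQbar n Q)"
  proof
    assume h: "(\<forall>(i,j)\<in>Q. \<not> (i \<in> R \<and> j \<notin> R)) \<and> (\<forall>(i,j)\<in>Epairs n - Q. \<not> (j \<in> R \<and> i \<notin> R))"
    show "\<forall>x\<in>R. \<forall>m\<in>{1..n} - R. (x, m) \<in> EQbar n Q"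
    proof (intro ballI)
      fix x m assume x: "x \<in> R" and m: "m \<in> {1..n} - R"
      have xr: "x \<in> {1..n}" using x Rb by auto
      have "x \<noteq> m" using x m by auto
      then consider "x < m" | "m < x" by linarith
      then show "(x, m) \<in> EQbar n Q"
      proof cases
        case 1
        then have "(x, m) \<in> Epairs n" using xr m by (auto simp: Epairs_def)
        moreover have "(x, m) \<notin> Q" using h x m by auto
        ultimately show ?thesis by (auto simp: EQbar_def)
      next
        case 2
        then have "(m, x) \<in> Epairs n" using xr m by (auto simp: Epairs_def)
        then have "(m, x) \<in> Q" using h x m by auto
        then show ?thesis by (auto simp: EQbar_def)
      qed
    qed
  next
    assume h: "\<forall>x\<in>R. \<forall>m\<in>{1..n} - R. (x, m) \<in> EQbar n Q"
    have c1: "\<not> (i \<in> R \<and> j \<notin> R)" if "(i,j) \<in> Q" for i j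
    proof
      assume ij: "i \<in> R \<and> j \<notin> R"
      have "(i,j) \<in> Epairs n" using that assms(2) by auto
      then have "j \<in> {1..n}" "i < j" by (auto simp: Epairs_def)
      then have "(i,j) \<in> EQbar n Q" using h ij by auto
      then have "(j, i) \<in> Q" using that by (auto simp: EQbar_def)
      then have "j < i" using assms(2) by (auto simp: Epairs_def)
      then show False using \<open>i < j\<close> by simp
    qed
    have c2: "\<not> (j \<in> R \<and> i \<notin> R)" if "(i,j) \<in> Epairs n - Q" for i j
    proof
      assume ij: "j \<in> R \<and> i \<notin> R"
      have "i \<in> {1..n}" "i < j" using that by (auto simp: Epairs_def)
      then have "(j,i) \<in> EQbar n Q" using h ij by auto
      then show False using that \<open>i < j\<close> by (auto simp: EQbar_def Epairs_def)
    qed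
    show "(\<forall>(i,j)\<in>Q. \<not> (i \<in> R \<and> j \<notin> R)) \<and> (\<forall>(i,j)\<in>Epairs n - Q. \<not> (j \<in> R \<and> i \<notin> R))"
      using c1 c2 by blast
  qed
  finally have iff: "D = 0 \<longleftrightarrow> (\<forall>x\<in>R. \<forall>m\<in>{1..n} - R. (x, m) \<in> EQbar n Q)" .
  show ?thesis
    using iff Dle unfolding D_def R_def by auto
qed

end
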